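(* Let $(g,f)$ be a Riordan matrix that possesses a type-I $B$-sequence, let $(a_j)_{j\ge0}$ be its $A$-sequence, and write $f(t)=\sum_{j\ge0}f_jt^j$. Then $a_0=1$ and $a_2=0$; equivalently, $f_1=1$ and $f_3=f_2^2$.
   Context: Let $K$ be $\mathbb{R}$ or $\mathbb{C}$. A (proper) Riordan matrix is a pair $(g,f)$ of formal power series in $K[[t]]$ with $g(0)=1$, $f(0)=0$, $f'(0)\neq 0$, identified with the infinite lower triangular matrix $(d_{n,k})_{n,k\ge0}$, $d_{n,k}=[t^n]g(t)f(t)^k$; we set $d_{n,k}=0$ if $n<0$, $k<0$ or $k>n$. The $A$-sequence $(a_j)_{j\ge0}$ of $(g,f)$ is the unique sequence whose generating function $A(t)=\sum_j a_jt^j$ satisfies $f(t)=tA(f(t))$. A type-I $B$-sequence of $(g,f)$ is a sequence $(b_j)_{j\ge0}$ such that $d_{n+1,k}=d_{n,k-1}+\sum_{j\ge0}b_j d_{n-j,k+j}$ for all $n\ge0$ and $k\ge1$. *)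

theory Defs
  imports "HOL-Computational_Algebra.Formal_Power_Series"
begin

definition riordan :: "'a::field fps \<Rightarrow> 'a fps \<Rightarrow> bool" where
  "riordan g f \<longleftrightarrow> fps_nth g 0 = 1 \<and> fps_nth f 0 = 0 \<and> fps_nth f 1 \<noteq> 0"

text \<open>Entry d_{n,k} = [t^n] g f^k (for nonnegative indices; it vanishes for k > n
  automatically because f(0) = 0; entries with negative indices are 0 and never arise below).\<close>
definition riordan_entry :: "'a::field fps \<Rightarrow> 'a fps \<Rightarrow> nat \<Rightarrow> nat \<Rightarrow> 'a" where
  "riordan_entry g f n k = fps_nth (g * f ^ k) n"

definition is_A_sequence :: "'a::field fps \<Rightarrow> 'a fps \<Rightarrow> bool" where
  "is_A_sequence f A \<longleftrightarrow> f = fps_X * fps_compose A f"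

text \<open>Type-I B-sequence: d_{n+1,k} = d_{n,k-1} + sum_j b_j d_{n-j,k+j} for n >= 0, k >= 1.
  Terms with j > n vanish since d_{n-j,.} = 0 for negative row index, so the sum is
  truncated to j <= n.\<close>
definition is_typeI_B_sequence :: "'a::field fps \<Rightarrow> 'a fps \<Rightarrow> (nat \<Rightarrow> 'a) \<Rightarrow> bool" where
  "is_typeI_B_sequence g f b \<longleftrightarrow>
     (\<forall>n k. 1 \<le> k \<longrightarrow>
        riordan_entry g f (n + 1) k =
          riordan_entry g f n (k - 1) + (\<Sum>j\<le>n. b j * riordan_entry g f (n - j) (k + j)))"

definition has_typeI_B_sequence :: "'a::field fps \<Rightarrow> 'a fps \<Rightarrow> bool" where
  "has_typeI_B_sequence g f \<longleftrightarrow> (\<exists>b. is_typeI_B_sequence g f b)"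

end

theory Submission
  imports Defs
begin

lemma main:
  fixes g f A :: "'a::field fps"
  assumes r: "riordan g f" and B: "has_typeI_B_sequence g f" and As: "is_A_sequence f A"
  shows "fps_nth A 0 = 1 \<and> fps_nth A 2 = 0 \<and> fps_nth f 1 = 1 \<and> fps_nth f 3 = (fps_nth f 2)\<^sup>2"
proof -
  from B obtain b where b: "is_typeI_B_sequence g f b" unfolding has_typeI_B_sequence_def by blast
  have g0: "fps_nth g 0 = 1" and f0: "fps_nth f 0 = 0" and f1: "fps_nth f 1 \<noteq> 0" using r by (auto simp: riordan_def)
  have e: "riordan_entry g f (n + 1) 1 =
          riordan_entry g f n 0 + (\<Sum>j\<le>n. b j * riordan_entry g f (n - j) (1 + j))" for n
    using b[unfolded is_typeI_B_sequence_def, rule_format, of 1 n] by simp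
  have e0: "fps_nth (g*f) 1 = fps_nth g 0 + b 0 * fps_nth (g * f) 0" using e[of 0] by (simp add: riordan_entry_def)
  have f11: "fps_nth f 1 = 1" using e0 g0 f0 by (simp add: fps_mult_nth)
  have e1: "fps_nth (g*f) 2 = fps_nth g 1 + b 0 * fps_nth (g * f) 1 + b 1 * fps_nth (g * f^2) 0"
    using e[of 1] by (simp add: riordan_entry_def numeral_2_eq_2)
  have e2: "fps_nth (g*f) 3 = fps_nth g 2 + b 0 * fps_nth (g * f) 2 + b 1 * fps_nth (g * f^2) 1 + b 2 * fps_nth (g * f^3) 0"
    using e[of 2] by (simp add: riordan_entry_def numeral_2_eq_2 numeral_3_eq_3)
  have p2: "fps_nth (f^2) n = (\<Sum>i=0..n. fps_nth f i * fps_nth f (n-i))" for n by (simp add: power2_eq_square fps_mult_nth)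
  have p3: "fps_nth (f^3) 0 = 0" using f0 by (simp add: fps_mult_nth power3_eq_cube)
  have b0: "b 0 = fps_nth f 2" using e1 g0 f0 f11 by (simp add: fps_mult_nth p2 numeral_2_eq_2)
  have f3: "fps_nth f 3 = (fps_nth f 2)\<^sup>2" using e2 g0 f0 f11 b0 p3
    by (simp add: fps_mult_nth p2 numeral_2_eq_2 numeral_3_eq_3 power2_eq_square algebra_simps)
  have fc: "fps_nth f (Suc n) = fps_nth (fps_compose A f) n" for n
  proof -
    have "fps_nth f (Suc n) = fps_nth (fps_X * (fps_compose A f)) (Suc n)"
      using As unfolding is_A_sequence_def by (rule arg_cong)
    then show ?thesis by (simp only: fps_X_mult_nth) simp
  qed
  have a0: "fps_nth A 0 = 1" using fc[of 0] f11 by simp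
  have a1: "fps_nth A 1 = fps_nth f 2" using fc[of 1] f0 f11
    by (simp add: fps_compose_nth numeral_2_eq_2)
  have a2: "fps_nth f 3 = fps_nth A 1 * fps_nth f 2 + fps_nth A 2" using fc[of 2] f0 f11
    by (simp add: fps_compose_nth numeral_2_eq_2 numeral_3_eq_3 p2 fps_mult_nth)
  show ?thesis using a0 a1 a2 f3 f11 by (simp add: power2_eq_square)
qed

theorem theorem2p2:
  shows "(\<forall>(g::real fps) (f::real fps) A.
            riordan g f \<and> has_typeI_B_sequence g f \<and> is_A_sequence f A \<longrightarrow>
            fps_nth A 0 = 1 \<and> fps_nth A 2 = 0 \<and>
            fps_nth f 1 = 1 \<and> fps_nth f 3 = (fps_nth f 2)\<^sup>2)
       \<and> (\<forall>(g::complex fps) (f::complex fps) A.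
            riordan g f \<and> has_typeI_B_sequence g f \<and> is_A_sequence f A \<longrightarrow>
            fps_nth A 0 = 1 \<and> fps_nth A 2 = 0 \<and>
            fps_nth f 1 = 1 \<and> fps_nth f 3 = (fps_nth f 2)\<^sup>2)"
  by (rule conjI; (intro allI impI; elim conjE; rule main; assumption))

end
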